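(* Let $(\mathfrak{g},[\cdot,\cdot]_{\mathfrak{g}},\phi_{\mathfrak{g}})$ and $(\mathfrak g^*,[\cdot,\cdot]_{\mathfrak g^*},\phi_{\mathfrak g^*})$ be two weakly involutive Hom-Lie algebras ($\mathfrak g$ finite-dimensional, $\mathfrak g^*$ its dual space, $\phi_{\mathfrak g^*}$ an arbitrary linear map). Then $(\mathfrak g\oplus\mathfrak g^*;\mathfrak g,\mathfrak g^* )$ is a Manin triple of Hom-Lie algebras associated to the nondegenerate symmetric bilinear form $\mathfrak B(x+a,y+b)=\langle x,b\rangle+\langle y,a\rangle$ (i.e. there is a Hom-Lie algebra structure on $\mathfrak g\oplus\mathfrak g^*$ having $\mathfrak g$ and $\mathfrak g^*$ as Hom-Lie subalgebras with their given structures and for which $\mathfrak B$ is invariant) if and only if $\phi_{\mathfrak g^*}=\phi_{\mathfrak g}^*$ and $(\mathfrak g,\mathfrak g^*;\mathrm{ad}^\circ,\mathfrak{ad}^\circ)$ is a matched pair of Hom-Lie algebras.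
   Context: A Hom-Lie algebra $(\mathfrak{h},[\cdot,\cdot]_{\mathfrak{h}},\phi_{\mathfrak{h}})$: skew-symmetric bilinear bracket and linear map with $\phi_{\mathfrak h}[x,y]=[\phi_{\mathfrak h}x,\phi_{\mathfrak h}y]$ and $[\phi_{\mathfrak h}(x),[y,z]]+[\phi_{\mathfrak h}(y),[z,x]]+[\phi_{\mathfrak h}(z),[x,y]]=0$; weakly involutive if $[\phi_{\mathfrak h}^2(x),y]=[x,y]$. A representation $(V,\beta,\rho)$: $\beta\in\mathfrak{gl}(V)$, $\rho:\mathfrak h\to\mathfrak{gl}(V)$ with $\rho(\phi_{\mathfrak h}(x))\beta=\beta\rho(x)$ and $\rho([x,y])\beta=\rho(\phi_{\mathfrak h}(x))\rho(y)-\rho(\phi_{\mathfrak h}(y))\rho(x)$. $\mathrm{ad}^\circ:\mathfrak g\to\mathfrak{gl}(\mathfrak g^* )$, $\langle\mathrm{ad}^\circ_xa,y\rangle=-\langle a,[\phi_{\mathfrak g}(x),y]_{\mathfrak g}\rangle$; $\mathfrak{ad}^\circ:\mathfrak g^*\to\mathfrak{gl}(\mathfrak g)$, $\langle\mathfrak{ad}^\circ_ax,b\rangle=-\langle x,[\phi_{\mathfrak g^*}(a),b]_{\mathfrak g^*}\rangle$. A bilinear form $\mathfrak B$ on a Hom-Lie algebra $(\mathfrak k,[\cdot,\cdot]_{\mathfrak k},\phi_{\mathfrak k})$ is invariant if $\mathfrak B([x,y]_{\mathfrak k},z)=\mathfrak B(x,[\phi_{\mathfrak k}(y),z]_{\mathfrak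 k})$ and $\mathfrak B(\phi_{\mathfrak k}(x),y)=\mathfrak B(x,\phi_{\mathfrak k}(y))$. A Manin triple $(\mathfrak k;\mathfrak g,\mathfrak g')$: a Hom-Lie algebra $\mathfrak k$ with a nondegenerate symmetric invariant bilinear form such that $\mathfrak g,\mathfrak g'$ are isotropic Hom-Lie subalgebras and $\mathfrak k=\mathfrak g\oplus\mathfrak g'$ as vector spaces. A matched pair $(\mathfrak g,\mathfrak g';\rho,\rho')$: Hom-Lie algebras $\mathfrak g,\mathfrak g'$, representations $(\mathfrak g',\phi_{\mathfrak g'},\rho)$ of $\mathfrak g$ and $(\mathfrak g,\phi_{\mathfrak g},\rho')$ of $\mathfrak g'$ with, for all $x,y\in\mathfrak g$, $x',y'\in\mathfrak g'$: $\rho'(\phi_{\mathfrak g'}(x'))[x,y]_{\mathfrak g}=[\rho'(x')x,\phi_{\mathfrak g}(y)]_{\mathfrak g}+[\phi_{\mathfrak g}(x),\rho'(x')y]_{\mathfrak g}+\rho'(\rho(y)x')\phi_{\mathfrak g}(x)-\rho'(\rho(x)x')\phi_{\mathfrak g}(y)$ and $\rho(\phi_{\mathfrak g}(x))[x',y']_{\mathfrak g'}=[\rho(x)x',\phi_{\mathfrak g'}(y')]_{\mathfrak g'}+[\phi_{\mathfrak g'}(x'),\rho(x)y']_{\mathfrak g'}+\rho(\rho'(y')x)\phi_{\mathfrak g'}(x')-\rho(\rho'(x')x)\phi_{\mathfrak g'}(y')$. *)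

theory Defs
  imports Main
begin

text \<open>Finite-dimensional vector spaces over a field 'k are modelled as coordinate
spaces 'n \<Rightarrow> 'k with 'n a finite index type. The dual space of g = ('n \<Rightarrow> 'k)
is modelled as ('n \<Rightarrow> 'k) via the nondegenerate pairing pairing x a = sum_i x i * a i.
The direct sum g \<oplus> g* is modelled as ('n + 'n) \<Rightarrow> 'k.\<close>

definition vadd :: "('a \<Rightarrow> 'k::field) \<Rightarrow> ('a \<Rightarrow> 'k) \<Rightarrow> ('a \<Rightarrow> 'k)" where
  "vadd x y = (\<lambda>i. x i + y i)"

definition vsub :: "('a \<Rightarrow> 'k::field) \<Rightarrow> ('a \<Rightarrow> 'k) \<Rightarrow> ('a \<Rightarrow> 'k)" where
  "vsub x y = (\<lambda>i. x i - y i)"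

definition smul :: "'k::field \<Rightarrow> ('a \<Rightarrow> 'k) \<Rightarrow> ('a \<Rightarrow> 'k)" where
  "smul c x = (\<lambda>i. c * x i)"

definition vneg :: "('a \<Rightarrow> 'k::field) \<Rightarrow> ('a \<Rightarrow> 'k)" where
  "vneg x = (\<lambda>i. - x i)"

definition vzero :: "'a \<Rightarrow> 'k::field" where
  "vzero = (\<lambda>i. 0)"

definition lin :: "(('a \<Rightarrow> 'k::field) \<Rightarrow> ('b \<Rightarrow> 'k)) \<Rightarrow> bool" where
  "lin f \<longleftrightarrow> (\<forall>x y. f (vadd x y) = vadd (f x) (f y)) \<and> (\<forall>c x. f (smul c x) = smul c (f x))"

definition bilin :: "(('a \<Rightarrow> 'k::field) \<Rightarrow> ('b \<Rightarrow> 'k) \<Rightarrow> ('c \<Rightarrow> 'k)) \<Rightarrow> bool" where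
  "bilin br \<longleftrightarrow> (\<forall>x. lin (br x)) \<and> (\<forall>y. lin (\<lambda>x. br x y))"

definition hom_lie :: "(('a \<Rightarrow> 'k::field) \<Rightarrow> ('a \<Rightarrow> 'k) \<Rightarrow> ('a \<Rightarrow> 'k))
    \<Rightarrow> (('a \<Rightarrow> 'k) \<Rightarrow> ('a \<Rightarrow> 'k)) \<Rightarrow> bool" where
  "hom_lie br \<phi> \<longleftrightarrow> bilin br \<and> lin \<phi>
     \<and> (\<forall>x y. br x y = vneg (br y x))
     \<and> (\<forall>x y. \<phi> (br x y) = br (\<phi> x) (\<phi> y))
     \<and> (\<forall>x y z. vadd (vadd (br (\<phi> x) (br y z)) (br (\<phi> y) (br z x))) (br (\<phi> z) (br x y)) = vzero)"

definition weakly_involutive :: "(('a \<Rightarrow> 'k::field) \<Rightarrow> ('a \<Rightarrow> 'k) \<Rightarrow> ('a \<Rightarrow> 'k))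
    \<Rightarrow> (('a \<Rightarrow> 'k) \<Rightarrow> ('a \<Rightarrow> 'k)) \<Rightarrow> bool" where
  "weakly_involutive br \<phi> \<longleftrightarrow> (\<forall>x y. br (\<phi> (\<phi> x)) y = br x y)"

definition representation :: "(('a \<Rightarrow> 'k::field) \<Rightarrow> ('a \<Rightarrow> 'k) \<Rightarrow> ('a \<Rightarrow> 'k))
    \<Rightarrow> (('a \<Rightarrow> 'k) \<Rightarrow> ('a \<Rightarrow> 'k)) \<Rightarrow> (('b \<Rightarrow> 'k) \<Rightarrow> ('b \<Rightarrow> 'k))
    \<Rightarrow> (('a \<Rightarrow> 'k) \<Rightarrow> ('b \<Rightarrow> 'k) \<Rightarrow> ('b \<Rightarrow> 'k)) \<Rightarrow> bool" where
  "representation br \<phi> \<beta> \<rho> \<longleftrightarrow> lin \<beta> \<and> bilin \<rho>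
     \<and> (\<forall>x v. \<rho> (\<phi> x) (\<beta> v) = \<beta> (\<rho> x v))
     \<and> (\<forall>x y v. \<rho> (br x y) (\<beta> v) = vsub (\<rho> (\<phi> x) (\<rho> y v)) (\<rho> (\<phi> y) (\<rho> x v)))"

definition matched_pair :: "(('a \<Rightarrow> 'k::field) \<Rightarrow> ('a \<Rightarrow> 'k) \<Rightarrow> ('a \<Rightarrow> 'k))
    \<Rightarrow> (('a \<Rightarrow> 'k) \<Rightarrow> ('a \<Rightarrow> 'k))
    \<Rightarrow> (('b \<Rightarrow> 'k) \<Rightarrow> ('b \<Rightarrow> 'k) \<Rightarrow> ('b \<Rightarrow> 'k)) \<Rightarrow> (('b \<Rightarrow> 'k) \<Rightarrow> ('b \<Rightarrow> 'k))
    \<Rightarrow> (('a \<Rightarrow> 'k) \<Rightarrow> ('b \<Rightarrow> 'k) \<Rightarrow> ('b \<Rightarrow> 'k))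
    \<Rightarrow> (('b \<Rightarrow> 'k) \<Rightarrow> ('a \<Rightarrow> 'k) \<Rightarrow> ('a \<Rightarrow> 'k)) \<Rightarrow> bool" where
  "matched_pair br \<phi> br' \<phi>' \<rho> \<rho>' \<longleftrightarrow>
     hom_lie br \<phi> \<and> hom_lie br' \<phi>'
     \<and> representation br \<phi> \<phi>' \<rho> \<and> representation br' \<phi>' \<phi> \<rho>'
     \<and> (\<forall>x y x'. \<rho>' (\<phi>' x') (br x y) =
          vsub (vadd (vadd (br (\<rho>' x' x) (\<phi> y)) (br (\<phi> x) (\<rho>' x' y)))
                     (\<rho>' (\<rho> y x') (\<phi> x)))
               (\<rho>' (\<rho> x x') (\<phi> y)))
     \<and> (\<forall>x x' y'. \<rho> (\<phi> x) (br' x' y') =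
          vsub (vadd (vadd (br' (\<rho> x x') (\<phi>' y')) (br' (\<phi>' x') (\<rho> x y')))
                     (\<rho> (\<rho>' y' x) (\<phi>' x')))
               (\<rho> (\<rho>' x' x) (\<phi>' y')))"

definition pairing :: "('n::finite \<Rightarrow> 'k::field) \<Rightarrow> ('n \<Rightarrow> 'k) \<Rightarrow> 'k" where
  "pairing x a = (\<Sum>i\<in>UNIV. x i * a i)"

definition ad_circ :: "(('n::finite \<Rightarrow> 'k::field) \<Rightarrow> ('n \<Rightarrow> 'k) \<Rightarrow> ('n \<Rightarrow> 'k))
    \<Rightarrow> (('n \<Rightarrow> 'k) \<Rightarrow> ('n \<Rightarrow> 'k)) \<Rightarrow> ('n \<Rightarrow> 'k) \<Rightarrow> ('n \<Rightarrow> 'k) \<Rightarrow> ('n \<Rightarrow> 'k)" where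
  "ad_circ br \<phi> x a = (THE b. \<forall>y. pairing y b = - pairing (br (\<phi> x) y) a)"

definition coad_circ :: "(('n::finite \<Rightarrow> 'k::field) \<Rightarrow> ('n \<Rightarrow> 'k) \<Rightarrow> ('n \<Rightarrow> 'k))
    \<Rightarrow> (('n \<Rightarrow> 'k) \<Rightarrow> ('n \<Rightarrow> 'k)) \<Rightarrow> ('n \<Rightarrow> 'k) \<Rightarrow> ('n \<Rightarrow> 'k) \<Rightarrow> ('n \<Rightarrow> 'k)" where
  "coad_circ brs \<phi>s a x = (THE y. \<forall>b. pairing y b = - pairing x (brs (\<phi>s a) b))"

definition incl1 :: "('n \<Rightarrow> 'k::field) \<Rightarrow> ('n + 'n \<Rightarrow> 'k)" where
  "incl1 x = case_sum x (\<lambda>_. 0)"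

definition incl2 :: "('n \<Rightarrow> 'k::field) \<Rightarrow> ('n + 'n \<Rightarrow> 'k)" where
  "incl2 a = case_sum (\<lambda>_. 0) a"

definition formB :: "('n::finite + 'n \<Rightarrow> 'k::field) \<Rightarrow> ('n + 'n \<Rightarrow> 'k) \<Rightarrow> 'k" where
  "formB u v = pairing (u \<circ> Inl) (v \<circ> Inr) + pairing (v \<circ> Inl) (u \<circ> Inr)"

definition invariant_form :: "(('m \<Rightarrow> 'k::field) \<Rightarrow> ('m \<Rightarrow> 'k) \<Rightarrow> 'k)
    \<Rightarrow> (('m \<Rightarrow> 'k) \<Rightarrow> ('m \<Rightarrow> 'k) \<Rightarrow> ('m \<Rightarrow> 'k)) \<Rightarrow> (('m \<Rightarrow> 'k) \<Rightarrow> ('m \<Rightarrow> 'k)) \<Rightarrow> bool" where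
  "invariant_form B br \<phi> \<longleftrightarrow> (\<forall>x y z. B (br x y) z = B x (br (\<phi> y) z))
       \<and> (\<forall>x y. B (\<phi> x) y = B x (\<phi> y))"

end

theory Submission
  imports Defs "HOL-Library.Function_Algebras"
begin

lemma vadd_eq: "vadd x y = x + y" by (simp add: vadd_def plus_fun_def)
lemma vsub_eq: "vsub x y = x - y" by (simp add: vsub_def fun_diff_def)
lemma vneg_eq: "vneg x = - x" by (simp add: vneg_def fun_Compl_def)
lemma vzero_eq: "vzero = 0" by (simp add: vzero_def zero_fun_def)

lemma smul_add: "smul c (x + y) = smul c x + smul c y"
  by (simp add: smul_def fun_eq_iff algebra_simps)
lemma smul_0: "smul 0 x = 0" by (simp add: smul_def fun_eq_iff)
lemma smul_m1: "smul (-1) x = - x" by (simp add: smul_def fun_eq_iff)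
lemma smul_diff: "smul c (x - y) = smul c x - smul c y"
  by (simp add: smul_def fun_eq_iff algebra_simps)
lemma smul_neg: "smul c (- x) = - smul c x"
  by (simp add: smul_def fun_eq_iff algebra_simps)
lemma smul_zero: "smul c 0 = 0" by (simp add: smul_def fun_eq_iff)

lemma lin_add: "lin f \<Longrightarrow> f (x + y) = f x + f y"
  by (simp add: lin_def vadd_eq)
lemma lin_smul: "lin f \<Longrightarrow> f (smul c x) = smul c (f x)"
  by (simp add: lin_def)
lemma lin_zero: "lin f \<Longrightarrow> f 0 = 0"
  using lin_smul[of f 0 0] by (simp add: smul_0)
lemma lin_neg: "lin f \<Longrightarrow> f (- x) = - f x"
  using lin_smul[of f "-1" x] by (simp add: smul_m1)
lemma lin_diff: "lin f \<Longrightarrow> f (x - y) = f x - f y"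
  using lin_add[of f x "-y"] lin_neg[of f y] by simp

lemma linI: "(\<And>x y. f (x + y) = f x + f y) \<Longrightarrow> (\<And>c x. f (smul c x) = smul c (f x)) \<Longrightarrow> lin f"
  by (simp add: lin_def vadd_eq)

lemma bilin1: "bilin br \<Longrightarrow> lin (\<lambda>x. br x y)" by (simp add: bilin_def)
lemma bilin2: "bilin br \<Longrightarrow> lin (br x)" by (simp add: bilin_def)

lemma bil_add1: "bilin br \<Longrightarrow> br (x + x') y = br x y + br x' y"
  using lin_add[OF bilin1] by blast
lemma bil_add2: "bilin br \<Longrightarrow> br x (y + y') = br x y + br x y'"
  using lin_add[OF bilin2] by blast
lemma bil_diff1: "bilin br \<Longrightarrow> br (x - x') y = br x y - br x' y"
  using lin_diff[OF bilin1] by blast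
lemma bil_diff2: "bilin br \<Longrightarrow> br x (y - y') = br x y - br x y'"
  using lin_diff[OF bilin2] by blast
lemma bil_neg1: "bilin br \<Longrightarrow> br (- x) y = - br x y"
  using lin_neg[OF bilin1] by blast
lemma bil_neg2: "bilin br \<Longrightarrow> br x (- y) = - br x y"
  using lin_neg[OF bilin2] by blast
lemma bil_zero1: "bilin br \<Longrightarrow> br 0 y = 0"
  using lin_zero[OF bilin1] by blast
lemma bil_zero2: "bilin br \<Longrightarrow> br x 0 = 0"
  using lin_zero[OF bilin2] by blast
lemma bil_smul1: "bilin br \<Longrightarrow> br (smul c x) y = smul c (br x y)"
  using lin_smul[OF bilin1] by blast
lemma bil_smul2: "bilin br \<Longrightarrow> br x (smul c y) = smul c (br x y)"
  using lin_smul[OF bilin2] by blast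

lemmas bil_simps = bil_add1 bil_add2 bil_diff1 bil_diff2 bil_neg1 bil_neg2 bil_zero1 bil_zero2
lemmas lin_simps = lin_add lin_diff lin_neg lin_zero

lemma hom_lie_alt: "hom_lie br \<phi> \<longleftrightarrow> bilin br \<and> lin \<phi>
     \<and> (\<forall>x y. br x y = - (br y x))
     \<and> (\<forall>x y. \<phi> (br x y) = br (\<phi> x) (\<phi> y))
     \<and> (\<forall>x y z. br (\<phi> x) (br y z) + br (\<phi> y) (br z x) + br (\<phi> z) (br x y) = 0)"
  by (simp add: hom_lie_def vadd_eq vneg_eq vzero_eq)

definition pack :: "('n \<Rightarrow> 'k::field) \<Rightarrow> ('n \<Rightarrow> 'k) \<Rightarrow> ('n + 'n \<Rightarrow> 'k)" where
  "pack x a = case_sum x a"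
definition p1 :: "('n + 'n \<Rightarrow> 'k::field) \<Rightarrow> ('n \<Rightarrow> 'k)" where "p1 u = (\<lambda>i. u (Inl i))"
definition p2 :: "('n + 'n \<Rightarrow> 'k::field) \<Rightarrow> ('n \<Rightarrow> 'k)" where "p2 u = (\<lambda>i. u (Inr i))"

lemma p1_pack[simp]: "p1 (pack x a) = x" by (simp add: p1_def pack_def)
lemma p2_pack[simp]: "p2 (pack x a) = a" by (simp add: p2_def pack_def)
lemma pack_p[simp]: "pack (p1 u) (p2 u) = u"
  by (simp add: p1_def p2_def pack_def fun_eq_iff split: sum.split)
lemma pack_add[simp]: "pack x a + pack y b = pack (x + y) (a + b)"
  by (simp add: pack_def fun_eq_iff split: sum.split)
lemma pack_diff[simp]: "pack x a - pack y b = pack (x - y) (a - b)"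
  by (simp add: pack_def fun_eq_iff split: sum.split)
lemma pack_neg[simp]: "- pack x a = pack (- x) (- a)"
  by (simp add: pack_def fun_eq_iff split: sum.split)
lemma pack_smul[simp]: "smul c (pack x a) = pack (smul c x) (smul c a)"
  by (simp add: pack_def smul_def fun_eq_iff split: sum.split)
lemma pack_zero[simp]: "pack 0 0 = 0"
  by (simp add: pack_def fun_eq_iff split: sum.split)
lemma pack_eq[simp]: "pack x a = pack y b \<longleftrightarrow> x = y \<and> a = b"
  by (metis p1_pack p2_pack)
lemma pack_eq0[simp]: "pack x a = 0 \<longleftrightarrow> x = 0 \<and> a = 0"
  by (metis pack_eq pack_zero)
lemma incl1_pack: "incl1 x = pack x 0" by (simp add: incl1_def pack_def zero_fun_def)
lemma incl2_pack: "incl2 a = pack 0 a" by (simp add: incl2_def pack_def zero_fun_def)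
lemma p1_add[simp]: "p1 (u + v) = p1 u + p1 v" by (simp add: p1_def fun_eq_iff)
lemma p2_add[simp]: "p2 (u + v) = p2 u + p2 v" by (simp add: p2_def fun_eq_iff)
lemma p1_smul[simp]: "p1 (smul c u) = smul c (p1 u)" by (simp add: p1_def smul_def fun_eq_iff)
lemma p2_smul[simp]: "p2 (smul c u) = smul c (p2 u)" by (simp add: p2_def smul_def fun_eq_iff)
lemma p1_neg[simp]: "p1 (- u) = - p1 u" by (simp add: p1_def fun_eq_iff)
lemma p2_neg[simp]: "p2 (- u) = - p2 u" by (simp add: p2_def fun_eq_iff)
lemma p1_zero[simp]: "p1 0 = 0" by (simp add: p1_def fun_eq_iff)
lemma p2_zero[simp]: "p2 0 = 0" by (simp add: p2_def fun_eq_iff)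
lemma pack_split: "pack x a = pack x 0 + pack 0 a" by simp

locale mp =
  fixes brg :: "('n \<Rightarrow> 'k::field) \<Rightarrow> ('n \<Rightarrow> 'k) \<Rightarrow> ('n \<Rightarrow> 'k)"
    and \<phi>g :: "('n \<Rightarrow> 'k) \<Rightarrow> ('n \<Rightarrow> 'k)"
    and brs :: "('n \<Rightarrow> 'k) \<Rightarrow> ('n \<Rightarrow> 'k) \<Rightarrow> ('n \<Rightarrow> 'k)"
    and \<phi>s :: "('n \<Rightarrow> 'k) \<Rightarrow> ('n \<Rightarrow> 'k)"
    and R :: "('n \<Rightarrow> 'k) \<Rightarrow> ('n \<Rightarrow> 'k) \<Rightarrow> ('n \<Rightarrow> 'k)"
    and R' :: "('n \<Rightarrow> 'k) \<Rightarrow> ('n \<Rightarrow> 'k) \<Rightarrow> ('n \<Rightarrow> 'k)"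
  assumes hg: "hom_lie brg \<phi>g" and hs: "hom_lie brs \<phi>s"
    and bR: "bilin R" and bR': "bilin R'"
begin

lemma bg: "bilin brg" and lg: "lin \<phi>g" and skg: "brg x y = - brg y x"
  and mg: "\<phi>g (brg x y) = brg (\<phi>g x) (\<phi>g y)"
  and jg: "brg (\<phi>g x) (brg y z) + brg (\<phi>g y) (brg z x) + brg (\<phi>g z) (brg x y) = 0"
  using hg unfolding hom_lie_alt by blast+
lemma bs: "bilin brs" and ls: "lin \<phi>s" and sks: "brs x y = - brs y x"
  and ms: "\<phi>s (brs x y) = brs (\<phi>s x) (\<phi>s y)"
  and js: "brs (\<phi>s x) (brs y z) + brs (\<phi>s y) (brs z x) + brs (\<phi>s z) (brs x y) = 0"
  using hs unfolding hom_lie_alt by blast+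

lemmas msimps[simp] = bil_simps[OF bg] bil_simps[OF bs] bil_simps[OF bR] bil_simps[OF bR']
  lin_simps[OF lg] lin_simps[OF ls]

definition bK :: "('n + 'n \<Rightarrow> 'k) \<Rightarrow> ('n + 'n \<Rightarrow> 'k) \<Rightarrow> ('n + 'n \<Rightarrow> 'k)" where
  "bK u v = pack (brg (p1 u) (p1 v) + R' (p2 u) (p1 v) - R' (p2 v) (p1 u))
                 (brs (p2 u) (p2 v) + R (p1 u) (p2 v) - R (p1 v) (p2 u))"
definition pK :: "('n + 'n \<Rightarrow> 'k) \<Rightarrow> ('n + 'n \<Rightarrow> 'k)" where
  "pK u = pack (\<phi>g (p1 u)) (\<phi>s (p2 u))"
definition Jac where
  "Jac u v w = bK (pK u) (bK v w) + bK (pK v) (bK w u) + bK (pK w) (bK u v)"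

lemma bK_pack[simp]: "bK (pack x a) (pack y b) = pack (brg x y + R' a y - R' b x) (brs a b + R x b - R y a)"
  by (simp add: bK_def)
lemma pK_pack[simp]: "pK (pack x a) = pack (\<phi>g x) (\<phi>s a)"
  by (simp add: pK_def)

lemma bK_add1: "bK (u + u') v = bK u v + bK u' v"
  by (simp add: bK_def algebra_simps)
lemma bK_add2: "bK v (u + u') = bK v u + bK v u'"
  by (simp add: bK_def algebra_simps)
lemma pK_add: "pK (u + u') = pK u + pK u'"
  by (simp add: pK_def algebra_simps)
lemma bK_smul1: "bK (smul c u) v = smul c (bK u v)"
  by (simp add: bK_def bil_smul1[OF bg] bil_smul1[OF bs] bil_smul1[OF bR] bil_smul1[OF bR']
     bil_smul2[OF bg] bil_smul2[OF bs] bil_smul2[OF bR] bil_smul2[OF bR'] smul_add smul_diff)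
lemma bK_smul2: "bK v (smul c u) = smul c (bK v u)"
  by (simp add: bK_def bil_smul1[OF bg] bil_smul1[OF bs] bil_smul1[OF bR] bil_smul1[OF bR']
     bil_smul2[OF bg] bil_smul2[OF bs] bil_smul2[OF bR] bil_smul2[OF bR'] smul_add smul_diff)
lemma pK_smul: "pK (smul c u) = smul c (pK u)"
  by (simp add: pK_def lin_smul[OF lg] lin_smul[OF ls])

lemma bilin_bK: "bilin bK"
  unfolding bilin_def by (auto intro!: linI simp: bK_add1 bK_add2 bK_smul1 bK_smul2)
lemma lin_pK: "lin pK"
  by (auto intro!: linI simp: pK_add pK_smul)
lemma skew_bK: "bK u v = - bK v u"
  by (simp add: bK_def skg[of "p1 v" "p1 u"] sks[of "p2 v" "p2 u"] algebra_simps)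

lemma Jac_add1: "Jac (u + u') v w = Jac u v w + Jac u' v w"
  by (simp add: Jac_def bK_add1 bK_add2 pK_add algebra_simps)
lemma Jac_add2: "Jac v (u + u') w = Jac v u w + Jac v u' w"
  by (simp add: Jac_def bK_add1 bK_add2 pK_add algebra_simps)
lemma Jac_add3: "Jac v w (u + u') = Jac v w u + Jac v w u'"
  by (simp add: Jac_def bK_add1 bK_add2 pK_add algebra_simps)
lemma Jac_cyc: "Jac u v w = Jac v w u"
  by (simp add: Jac_def algebra_simps)

lemma J_ggs1: "p1 (Jac (pack x 0) (pack y 0) (pack 0 c)) =
   - brg (\<phi>g x) (R' c y) - R' (R y c) (\<phi>g x) + brg (\<phi>g y) (R' c x) + R' (R x c) (\<phi>g y) + R' (\<phi>s c) (brg x y)"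
  by (simp add: Jac_def algebra_simps)
lemma J_ggs2: "p2 (Jac (pack x 0) (pack y 0) (pack 0 c)) =
   R (\<phi>g x) (R y c) - R (\<phi>g y) (R x c) - R (brg x y) (\<phi>s c)"
  by (simp add: Jac_def algebra_simps)
lemma J_gss1: "p1 (Jac (pack x 0) (pack 0 b) (pack 0 c)) =
   - R' (brs b c) (\<phi>g x) + R' (\<phi>s b) (R' c x) - R' (\<phi>s c) (R' b x)"
  by (simp add: Jac_def algebra_simps)
lemma J_gss2: "p2 (Jac (pack x 0) (pack 0 b) (pack 0 c)) =
   R (\<phi>g x) (brs b c) - brs (\<phi>s b) (R x c) - R (R' c x) (\<phi>s b) + brs (\<phi>s c) (R x b) + R (R' b x) (\<phi>s c)"
  by (simp add: Jac_def algebra_simps)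


definition "rep1R \<longleftrightarrow> (\<forall>x a. R (\<phi>g x) (\<phi>s a) = \<phi>s (R x a))"
definition "rep2R \<longleftrightarrow> (\<forall>x y a. R (brg x y) (\<phi>s a) = R (\<phi>g x) (R y a) - R (\<phi>g y) (R x a))"
definition "rep1R' \<longleftrightarrow> (\<forall>a x. R' (\<phi>s a) (\<phi>g x) = \<phi>g (R' a x))"
definition "rep2R' \<longleftrightarrow> (\<forall>a b x. R' (brs a b) (\<phi>g x) = R' (\<phi>s a) (R' b x) - R' (\<phi>s b) (R' a x))"
definition "compat1 \<longleftrightarrow> (\<forall>x y c. R' (\<phi>s c) (brg x y) = brg (R' c x) (\<phi>g y) + brg (\<phi>g x) (R' c y) + R' (R y c) (\<phi>g x) - R' (R x c) (\<phi>g y))"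
definition "compat2 \<longleftrightarrow> (\<forall>x a b. R (\<phi>g x) (brs a b) = brs (R x a) (\<phi>s b) + brs (\<phi>s a) (R x b) + R (R' b x) (\<phi>s a) - R (R' a x) (\<phi>s b))"

lemma J_ggs1_iff: "p1 (Jac (pack x 0) (pack y 0) (pack 0 c)) = 0 \<longleftrightarrow>
   R' (\<phi>s c) (brg x y) = brg (R' c x) (\<phi>g y) + brg (\<phi>g x) (R' c y) + R' (R y c) (\<phi>g x) - R' (R x c) (\<phi>g y)"
proof -
  have "p1 (Jac (pack x 0) (pack y 0) (pack 0 c)) = R' (\<phi>s c) (brg x y) - (brg (R' c x) (\<phi>g y) + brg (\<phi>g x) (R' c y) + R' (R y c) (\<phi>g x) - R' (R x c) (\<phi>g y))"
    by (simp add: J_ggs1 skg[of "R' c x" "\<phi>g y"] algebra_simps)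
  then show ?thesis by simp
qed
lemma J_ggs2_iff: "p2 (Jac (pack x 0) (pack y 0) (pack 0 c)) = 0 \<longleftrightarrow>
   R (brg x y) (\<phi>s c) = R (\<phi>g x) (R y c) - R (\<phi>g y) (R x c)"
proof -
  have "p2 (Jac (pack x 0) (pack y 0) (pack 0 c)) = (R (\<phi>g x) (R y c) - R (\<phi>g y) (R x c)) - R (brg x y) (\<phi>s c)"
    by (simp add: J_ggs2 algebra_simps)
  then show ?thesis by auto
qed
lemma J_gss1_iff: "p1 (Jac (pack x 0) (pack 0 b) (pack 0 c)) = 0 \<longleftrightarrow>
   R' (brs b c) (\<phi>g x) = R' (\<phi>s b) (R' c x) - R' (\<phi>s c) (R' b x)"
proof -
  have "p1 (Jac (pack x 0) (pack 0 b) (pack 0 c)) = (R' (\<phi>s b) (R' c x) - R' (\<phi>s c) (R' b x)) - R' (brs b c) (\<phi>g x)"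
    by (simp add: J_gss1 algebra_simps)
  then show ?thesis by auto
qed
lemma J_gss2_iff: "p2 (Jac (pack x 0) (pack 0 b) (pack 0 c)) = 0 \<longleftrightarrow>
   R (\<phi>g x) (brs b c) = brs (R x b) (\<phi>s c) + brs (\<phi>s b) (R x c) + R (R' c x) (\<phi>s b) - R (R' b x) (\<phi>s c)"
proof -
  have "p2 (Jac (pack x 0) (pack 0 b) (pack 0 c)) = R (\<phi>g x) (brs b c) - (brs (R x b) (\<phi>s c) + brs (\<phi>s b) (R x c) + R (R' c x) (\<phi>s b) - R (R' b x) (\<phi>s c))"
    by (simp add: J_gss2 sks[of "R x b" "\<phi>s c"] algebra_simps)
  then show ?thesis by simp
qed

lemma Jac_0_iff: "Jac u v w = 0 \<longleftrightarrow> p1 (Jac u v w) = 0 \<and> p2 (Jac u v w) = 0"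
  by (metis pack_eq0 pack_p)

lemma J_ggg: "Jac (pack x 0) (pack y 0) (pack z 0) = 0"
proof -
  have "Jac (pack x 0) (pack y 0) (pack z 0) = pack (brg (\<phi>g x) (brg y z) + brg (\<phi>g y) (brg z x) + brg (\<phi>g z) (brg x y)) 0"
    by (simp add: Jac_def)
  then show ?thesis by (simp add: jg)
qed
lemma J_sss: "Jac (pack 0 a) (pack 0 b) (pack 0 c) = 0"
proof -
  have "Jac (pack 0 a) (pack 0 b) (pack 0 c) = pack 0 (brs (\<phi>s a) (brs b c) + brs (\<phi>s b) (brs c a) + brs (\<phi>s c) (brs a b))"
    by (simp add: Jac_def)
  then show ?thesis by (simp add: js)
qed

lemma Jac_zero:
  assumes "rep2R" "rep2R'" "compat1" "compat2"
  shows "Jac u v w = 0"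
proof -
  have ggs: "Jac (pack x 0) (pack y 0) (pack 0 c) = 0" for x y c
    using assms unfolding Jac_0_iff J_ggs1_iff J_ggs2_iff rep2R_def compat1_def by blast
  have gss: "Jac (pack x 0) (pack 0 b) (pack 0 c) = 0" for x b c
    using assms unfolding Jac_0_iff J_gss1_iff J_gss2_iff rep2R'_def compat2_def by blast
  have gsg: "Jac (pack x 0) (pack 0 b) (pack z 0) = 0" for x b z
    using ggs[of z x b] Jac_cyc by metis
  have sgg: "Jac (pack 0 a) (pack y 0) (pack z 0) = 0" for a y z
    using ggs[of y z a] Jac_cyc by metis
  have sgs: "Jac (pack 0 a) (pack y 0) (pack 0 c) = 0" for a y c
    using gss[of y c a] Jac_cyc by metis
  have ssg: "Jac (pack 0 a) (pack 0 b) (pack z 0) = 0" for a b z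
    using gss[of z a b] Jac_cyc by metis
  have "Jac u v w = Jac (pack (p1 u) 0 + pack 0 (p2 u)) (pack (p1 v) 0 + pack 0 (p2 v)) (pack (p1 w) 0 + pack 0 (p2 w))"
    by simp
  also have "\<dots> = 0"
    unfolding Jac_add1 Jac_add2 Jac_add3 by (simp only: ggs gss gsg sgg sgs ssg J_ggg J_sss add_0_right)
  finally show ?thesis .
qed

lemma mult_bK:
  assumes "rep1R" "rep1R'"
  shows "pK (bK u v) = bK (pK u) (pK v)"
proof -
  have a: "\<phi>s (R x a) = R (\<phi>g x) (\<phi>s a)" "\<phi>g (R' a x) = R' (\<phi>s a) (\<phi>g x)" for x a
    using assms unfolding rep1R_def rep1R'_def by auto
  show ?thesis by (simp add: bK_def pK_def a mg ms)
qed

lemma hom_lie_bK_iff: "hom_lie bK pK \<longleftrightarrow> rep1R \<and> rep2R \<and> rep1R' \<and> rep2R' \<and> compat1 \<and> compat2"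
proof
  assume H: "hom_lie bK pK"
  have m: "pK (bK u v) = bK (pK u) (pK v)" for u v using H unfolding hom_lie_alt by blast
  have J: "Jac u v w = 0" for u v w using H unfolding hom_lie_alt Jac_def by blast
  have "rep1R" unfolding rep1R_def
  proof (intro allI)
    fix x a show "R (\<phi>g x) (\<phi>s a) = \<phi>s (R x a)" using m[of "pack x 0" "pack 0 a"] by simp
  qed
  moreover have "rep1R'" unfolding rep1R'_def
  proof (intro allI)
    fix x a show "R' (\<phi>s a) (\<phi>g x) = \<phi>g (R' a x)" using m[of "pack x 0" "pack 0 a"] by simp
  qed
  moreover have "rep2R \<and> compat1"
    unfolding rep2R_def compat1_def using J J_ggs1_iff J_ggs2_iff Jac_0_iff by metis
  moreover have "rep2R' \<and> compat2"
    unfolding rep2R'_def compat2_def using J J_gss1_iff J_gss2_iff Jac_0_iff by metis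
  ultimately show "rep1R \<and> rep2R \<and> rep1R' \<and> rep2R' \<and> compat1 \<and> compat2" by blast
next
  assume "rep1R \<and> rep2R \<and> rep1R' \<and> rep2R' \<and> compat1 \<and> compat2"
  then show "hom_lie bK pK"
    unfolding hom_lie_alt using bilin_bK lin_pK skew_bK mult_bK Jac_zero unfolding Jac_def by blast
qed

end


lemma pairing_add1: "pairing (x + y) a = pairing x a + pairing y a"
  by (simp add: pairing_def sum.distrib algebra_simps)
lemma pairing_add2: "pairing x (a + b) = pairing x a + pairing x b"
  by (simp add: pairing_def sum.distrib algebra_simps)
lemma pairing_diff1: "pairing (x - y) a = pairing x a - pairing y a"
  by (simp add: pairing_def sum_subtractf algebra_simps)
lemma pairing_diff2: "pairing x (a - b) = pairing x a - pairing x b"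
  by (simp add: pairing_def sum_subtractf algebra_simps)
lemma pairing_neg1: "pairing (- x) a = - pairing x a"
  by (simp add: pairing_def sum_negf)
lemma pairing_neg2: "pairing x (- a) = - pairing x a"
  by (simp add: pairing_def sum_negf)
lemma pairing_zero1: "pairing 0 a = 0"
  by (simp add: pairing_def)
lemma pairing_zero2: "pairing x 0 = 0"
  by (simp add: pairing_def)
lemma pairing_smul1: "pairing (smul c x) a = c * pairing x a"
  by (simp add: pairing_def smul_def sum_distrib_left algebra_simps)
lemma pairing_comm: "pairing x a = pairing a x"
  by (simp add: pairing_def mult.commute)

lemmas pairing_simps = pairing_add1 pairing_add2 pairing_diff1 pairing_diff2 pairing_neg1 pairing_neg2
  pairing_zero1 pairing_zero2

lemma pairing_delta: "pairing (\<lambda>j. if j = i then 1 else 0) (b :: 'n::finite \<Rightarrow> 'k::field) = b i"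
  unfolding pairing_def by (subst sum.cong[OF refl, of _ _ "\<lambda>j. if j = i then b j else 0"]) auto

lemma nondeg2: "(\<And>y. pairing y b1 = pairing y (b2 :: 'n::finite \<Rightarrow> 'k::field)) \<Longrightarrow> b1 = b2"
  by (metis pairing_delta ext)
lemma nondeg1: "(\<And>c. pairing y1 c = pairing (y2 :: 'n::finite \<Rightarrow> 'k::field) c) \<Longrightarrow> y1 = y2"
  by (metis pairing_comm nondeg2)

lemma lin_sum: assumes "\<And>x y. L (x + y) = L x + L y" "L 0 = 0" "finite A"
  shows "L (\<Sum>i\<in>A. f i) = (\<Sum>i\<in>A. L (f i))"
  using assms(3) by (induction A rule: finite_induct) (auto simp: assms(1,2))

lemma fsum_apply: "(\<Sum>i\<in>A. f i) x = (\<Sum>i\<in>A. f i x)"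
proof (cases "finite A")
  case True then show ?thesis by (induction A rule: finite_induct) auto
qed simp

lemma riesz:
  fixes L :: "('n::finite \<Rightarrow> 'k::field) \<Rightarrow> 'k"
  assumes add: "\<And>x y. L (x + y) = L x + L y" and hom: "\<And>c x. L (smul c x) = c * L x"
  shows "\<exists>b. \<forall>y. L y = pairing y b"
proof -
  define d where "d i = (\<lambda>j. if j = i then (1::'k) else 0)" for i :: 'n
  have L0: "L 0 = 0" using hom[of 0 0] by (simp add: smul_0)
  have dec: "y = (\<Sum>i\<in>UNIV. smul (y i) (d i))" for y
    by (rule ext) (simp add: d_def smul_def fsum_apply if_distrib cong: if_cong)
  show ?thesis
  proof (intro exI allI)
    fix y
    have "L y = L (\<Sum>i\<in>UNIV. smul (y i) (d i))" using dec[of y] by simp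
    also have "\<dots> = (\<Sum>i\<in>UNIV. y i * L (d i))" by (simp add: lin_sum[of L, OF add L0] hom)
    also have "\<dots> = pairing y (\<lambda>i. L (d i))" by (simp add: pairing_def)
    finally show "L y = pairing y (\<lambda>i. L (d i))" .
  qed
qed

lemma ad_char:
  fixes brg :: "('n::finite \<Rightarrow> 'k::field) \<Rightarrow> ('n \<Rightarrow> 'k) \<Rightarrow> ('n \<Rightarrow> 'k)"
  assumes "bilin brg"
  shows "pairing y (ad_circ brg \<phi>g x a) = - pairing (brg (\<phi>g x) y) a"
proof -
  let ?P = "\<lambda>b. \<forall>y. pairing y b = - pairing (brg (\<phi>g x) y) a"
  have "\<exists>b. \<forall>y. - pairing (brg (\<phi>g x) y) a = pairing y b"
    by (rule riesz) (simp_all add: bil_add2[OF assms] bil_smul2[OF assms] pairing_add1 pairing_smul1)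
  then have "\<exists>!b. ?P b" by (metis nondeg2)
  then have "?P (THE b. ?P b)" by (rule theI')
  then show ?thesis unfolding ad_circ_def by blast
qed

lemma coad_char:
  fixes brs :: "('n::finite \<Rightarrow> 'k::field) \<Rightarrow> ('n \<Rightarrow> 'k) \<Rightarrow> ('n \<Rightarrow> 'k)"
  assumes "bilin brs"
  shows "pairing (coad_circ brs \<phi>s a x) b = - pairing x (brs (\<phi>s a) b)"
proof -
  let ?P = "\<lambda>y. \<forall>b. pairing y b = - pairing x (brs (\<phi>s a) b)"
  have "\<exists>y. \<forall>b. - pairing x (brs (\<phi>s a) b) = pairing b y"
    by (rule riesz) (simp_all add: bil_add2[OF assms] bil_smul2[OF assms] pairing_add2 pairing_smul1
       pairing_comm[of x])
  then have "\<exists>!y. ?P y" by (metis nondeg1 pairing_comm)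
  then have "?P (THE y. ?P y)" by (rule theI')
  then show ?thesis unfolding coad_circ_def by blast
qed

lemma formB_pack: "formB (pack x a) (pack y b) = pairing x b + pairing y a"
  by (simp add: formB_def pack_def comp_def)

lemma formB_neg1: "formB (- u) v = - formB u v"
  by (simp add: formB_def comp_def pairing_def sum_negf algebra_simps flip: sum.distrib)


lemma pack_add0: "pack (x + x') 0 = pack x 0 + pack x' 0" "pack 0 (x + x') = pack 0 x + pack 0 x'"
  by simp_all
lemma pack_smul0: "pack (smul c x) 0 = smul c (pack x 0)" "pack 0 (smul c x) = smul c (pack 0 x)"
  by (simp_all add: smul_zero)

lemma bilin_compR: assumes "bilin B" shows "bilin (\<lambda>x b. p2 (B (pack x 0) (pack 0 b)))"
  unfolding bilin_def
  by (auto intro!: linI simp only: pack_add0 pack_smul0 bil_add1[OF assms] bil_add2[OF assms]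
      bil_smul1[OF assms] bil_smul2[OF assms] p2_add p2_smul)

lemma bilin_compR': assumes "bilin B" shows "bilin (\<lambda>b x. - p1 (B (pack x 0) (pack 0 b)))"
  unfolding bilin_def
  by (auto intro!: linI simp only: pack_add0 pack_smul0 bil_add1[OF assms] bil_add2[OF assms]
      bil_smul1[OF assms] bil_smul2[OF assms] p1_add p1_smul smul_neg minus_add_distrib)

theorem proposition3p6:
  fixes brg :: "('n::finite \<Rightarrow> 'k::field) \<Rightarrow> ('n \<Rightarrow> 'k) \<Rightarrow> ('n \<Rightarrow> 'k)"
    and \<phi>g :: "('n \<Rightarrow> 'k) \<Rightarrow> ('n \<Rightarrow> 'k)"
    and brs :: "('n \<Rightarrow> 'k) \<Rightarrow> ('n \<Rightarrow> 'k) \<Rightarrow> ('n \<Rightarrow> 'k)"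
    and \<phi>s :: "('n \<Rightarrow> 'k) \<Rightarrow> ('n \<Rightarrow> 'k)"
  assumes "hom_lie brg \<phi>g" and "weakly_involutive brg \<phi>g"
    and "hom_lie brs \<phi>s" and "weakly_involutive brs \<phi>s"
  shows "(\<exists>(brK :: ('n + 'n \<Rightarrow> 'k) \<Rightarrow> ('n + 'n \<Rightarrow> 'k) \<Rightarrow> ('n + 'n \<Rightarrow> 'k)) \<phi>K.
            hom_lie brK \<phi>K
          \<and> (\<forall>x y. brK (incl1 x) (incl1 y) = incl1 (brg x y))
          \<and> (\<forall>x. \<phi>K (incl1 x) = incl1 (\<phi>g x))
          \<and> (\<forall>a b. brK (incl2 a) (incl2 b) = incl2 (brs a b))
          \<and> (\<forall>a. \<phi>K (incl2 a) = incl2 (\<phi>s a))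
          \<and> invariant_form formB brK \<phi>K)
     \<longleftrightarrow> ((\<forall>x a. pairing x (\<phi>s a) = pairing (\<phi>g x) a)
          \<and> matched_pair brg \<phi>g brs \<phi>s (ad_circ brg \<phi>g) (coad_circ brs \<phi>s))"
proof -
  have bg: "bilin brg" and lg: "lin \<phi>g" and skg: "\<And>x y. brg x y = - brg y x"
    and mg: "\<And>x y. \<phi>g (brg x y) = brg (\<phi>g x) (\<phi>g y)"
    using assms(1) unfolding hom_lie_alt by blast+
  have bs: "bilin brs" and ls: "lin \<phi>s" and sks: "\<And>x y. brs x y = - brs y x"
    and ms: "\<And>x y. \<phi>s (brs x y) = brs (\<phi>s x) (\<phi>s y)"
    using assms(3) unfolding hom_lie_alt by blast+
  have wg: "\<And>x y. brg (\<phi>g (\<phi>g x)) y = brg x y" using assms(2) unfolding weakly_involutive_def by blast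
  have ws: "\<And>x y. brs (\<phi>s (\<phi>s x)) y = brs x y" using assms(4) unfolding weakly_involutive_def by blast
  show ?thesis
  proof
    assume "\<exists>(brK :: ('n + 'n \<Rightarrow> 'k) \<Rightarrow> ('n + 'n \<Rightarrow> 'k) \<Rightarrow> ('n + 'n \<Rightarrow> 'k)) \<phi>K.
            hom_lie brK \<phi>K
          \<and> (\<forall>x y. brK (incl1 x) (incl1 y) = incl1 (brg x y))
          \<and> (\<forall>x. \<phi>K (incl1 x) = incl1 (\<phi>g x))
          \<and> (\<forall>a b. brK (incl2 a) (incl2 b) = incl2 (brs a b))
          \<and> (\<forall>a. \<phi>K (incl2 a) = incl2 (\<phi>s a))
          \<and> invariant_form formB brK \<phi>K"
    then obtain brK :: "('n + 'n \<Rightarrow> 'k) \<Rightarrow> ('n + 'n \<Rightarrow> 'k) \<Rightarrow> ('n + 'n \<Rightarrow> 'k)" and \<phi>K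
      where hK: "hom_lie brK \<phi>K"
        and i1: "\<forall>x y. brK (incl1 x) (incl1 y) = incl1 (brg x y)"
        and f1: "\<forall>x. \<phi>K (incl1 x) = incl1 (\<phi>g x)"
        and i2: "\<forall>a b. brK (incl2 a) (incl2 b) = incl2 (brs a b)"
        and f2: "\<forall>a. \<phi>K (incl2 a) = incl2 (\<phi>s a)"
        and inv: "invariant_form formB brK \<phi>K" by blast
    have i1': "\<And>x y. brK (pack x 0) (pack y 0) = pack (brg x y) 0" using i1 unfolding incl1_pack by blast
    have i2': "\<And>a b. brK (pack 0 a) (pack 0 b) = pack 0 (brs a b)" using i2 unfolding incl2_pack by blast
    have f1': "\<And>x. \<phi>K (pack x 0) = pack (\<phi>g x) 0" using f1 unfolding incl1_pack by blast
    have f2': "\<And>a. \<phi>K (pack 0 a) = pack 0 (\<phi>s a)" using f2 unfolding incl2_pack by blast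
    have bK: "bilin brK" and lK: "lin \<phi>K" and skK: "\<And>u v. brK u v = - brK v u"
      using hK unfolding hom_lie_alt by blast+
    have inv1: "\<And>u v w. formB (brK u v) w = formB u (brK (\<phi>K v) w)"
      and inv2: "\<And>u v. formB (\<phi>K u) v = formB u (\<phi>K v)"
      using inv unfolding invariant_form_def by blast+
    have adj: "\<forall>x a. pairing x (\<phi>s a) = pairing (\<phi>g x) a"
    proof (intro allI)
      fix x a
      show "pairing x (\<phi>s a) = pairing (\<phi>g x) a"
        using inv2[of "pack x 0" "pack 0 a"] by (simp add: f1' f2' formB_pack pairing_zero1 pairing_zero2)
    qed
    have fK: "\<phi>K (pack x a) = pack (\<phi>g x) (\<phi>s a)" for x a
    proof -
      have "\<phi>K (pack x a) = \<phi>K (pack x 0 + pack 0 a)" by simp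
      also have "\<dots> = \<phi>K (pack x 0) + \<phi>K (pack 0 a)" by (rule lin_add[OF lK])
      finally show ?thesis by (simp add: f1' f2')
    qed
    define R where "R x b = p2 (brK (pack x 0) (pack 0 b))" for x b
    define R' where "R' b x = - p1 (brK (pack x 0) (pack 0 b))" for b x
    have gs: "brK (pack x 0) (pack 0 b) = pack (- R' b x) (R x b)" for x b
      unfolding R_def R'_def by simp
    have bR: "bilin R" unfolding R_def using bilin_compR[OF bK] by simp
    have bR': "bilin R'" unfolding R'_def using bilin_compR'[OF bK] by simp
    have charR: "pairing y (R x b) = - pairing (brg (\<phi>g x) y) b" for x b y
    proof -
      have "pairing y (R x b) = formB (brK (pack x 0) (pack 0 b)) (pack y 0)"
        by (simp add: gs formB_pack pairing_zero2)
      also have "\<dots> = - formB (brK (pack 0 b) (pack x 0)) (pack y 0)"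
        by (subst skK) (simp add: formB_neg1)
      also have "\<dots> = - formB (pack 0 b) (brK (pack (\<phi>g x) 0) (pack y 0))"
        by (simp add: inv1 fK lin_zero[OF ls] lin_zero[OF lg])
      also have "\<dots> = - pairing (brg (\<phi>g x) y) b"
        by (simp add: i1' formB_pack pairing_zero1)
      finally show ?thesis .
    qed
    have charR': "pairing (R' b x) c = - pairing x (brs (\<phi>s b) c)" for x b c
    proof -
      have "- pairing (R' b x) c = formB (brK (pack x 0) (pack 0 b)) (pack 0 c)"
        by (simp add: gs formB_pack pairing_zero1 pairing_neg1)
      also have "\<dots> = formB (pack x 0) (brK (pack 0 (\<phi>s b)) (pack 0 c))"
        by (simp add: inv1 fK lin_zero[OF ls] lin_zero[OF lg])
      also have "\<dots> = pairing x (brs (\<phi>s b) c)"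
        by (simp add: i2' formB_pack pairing_zero1)
      finally show ?thesis by (metis minus_minus)
    qed
    have adR: "ad_circ brg \<phi>g = R"
    proof (rule ext, rule ext)
      fix x b show "ad_circ brg \<phi>g x b = R x b"
        by (rule nondeg2) (simp add: ad_char[OF bg] charR)
    qed
    have coR': "coad_circ brs \<phi>s = R'"
    proof (rule ext, rule ext)
      fix b x show "coad_circ brs \<phi>s b x = R' b x"
        by (rule nondeg1) (simp add: coad_char[OF bs] charR')
    qed
    interpret M: mp brg \<phi>g brs \<phi>s R R'
      using assms(1,3) bR bR' by unfold_locales
    have brK_pack: "brK (pack x a) (pack y b) = M.bK (pack x a) (pack y b)" for x a y b
    proof -
      have sg: "brK (pack 0 a) (pack y 0) = pack (R' a y) (- R y a)"
        by (subst skK) (simp add: gs)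
      have "brK (pack x a) (pack y b) = brK (pack x 0 + pack 0 a) (pack y 0 + pack 0 b)" by simp
      also have "\<dots> = brK (pack x 0) (pack y 0) + brK (pack x 0) (pack 0 b) + (brK (pack 0 a) (pack y 0) + brK (pack 0 a) (pack 0 b))"
        by (simp only: bil_add1[OF bK] bil_add2[OF bK] add_ac)
      also have "\<dots> = M.bK (pack x a) (pack y b)"
        by (simp only: i1' i2' gs sg M.bK_pack) (simp add: algebra_simps)
      finally show ?thesis .
    qed
    have brK_eq: "brK = M.bK"
    proof (rule ext, rule ext)
      fix u v
      show "brK u v = M.bK u v" using brK_pack[of "p1 u" "p2 u" "p1 v" "p2 v"] by simp
    qed
    have fK_eq: "\<phi>K = M.pK"
    proof (rule ext)
      fix u
      show "\<phi>K u = M.pK u" using fK[of "p1 u" "p2 u"] by (simp add: M.pK_def)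
    qed
    have "hom_lie M.bK M.pK" using hK brK_eq fK_eq by simp
    then have C: "M.rep1R \<and> M.rep2R \<and> M.rep1R' \<and> M.rep2R' \<and> M.compat1 \<and> M.compat2"
      using M.hom_lie_bK_iff by blast
    have "matched_pair brg \<phi>g brs \<phi>s R R'"
      using C assms(1,3) bR bR' ls lg
      unfolding matched_pair_def representation_def vsub_eq vadd_eq
        M.rep1R_def M.rep2R_def M.rep1R'_def M.rep2R'_def M.compat1_def M.compat2_def
      by blast
    then show "(\<forall>x a. pairing x (\<phi>s a) = pairing (\<phi>g x) a)
          \<and> matched_pair brg \<phi>g brs \<phi>s (ad_circ brg \<phi>g) (coad_circ brs \<phi>s)"
      using adj adR coR' by simp
  next
    assume H: "(\<forall>x a. pairing x (\<phi>s a) = pairing (\<phi>g x) a)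
          \<and> matched_pair brg \<phi>g brs \<phi>s (ad_circ brg \<phi>g) (coad_circ brs \<phi>s)"
    then have adj: "\<And>x a. pairing x (\<phi>s a) = pairing (\<phi>g x) a"
      and MP: "matched_pair brg \<phi>g brs \<phi>s (ad_circ brg \<phi>g) (coad_circ brs \<phi>s)" by blast+
    have bR: "bilin (ad_circ brg \<phi>g)" and bR': "bilin (coad_circ brs \<phi>s)"
      using MP unfolding matched_pair_def representation_def by blast+
    interpret M: mp brg \<phi>g brs \<phi>s "ad_circ brg \<phi>g" "coad_circ brs \<phi>s"
      using assms(1,3) bR bR' by unfold_locales
    have C: "M.rep1R \<and> M.rep2R \<and> M.rep1R' \<and> M.rep2R' \<and> M.compat1 \<and> M.compat2"
      using MP
      unfolding matched_pair_def representation_def vsub_eq vadd_eq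
        M.rep1R_def M.rep2R_def M.rep1R'_def M.rep2R'_def M.compat1_def M.compat2_def
      by blast
    have hK: "hom_lie M.bK M.pK" using C M.hom_lie_bK_iff by blast
    have e1: "pairing x (ad_circ brg \<phi>g (\<phi>g y) c) = pairing (brg x y) c" for x y c
      by (simp add: ad_char[OF bg] wg skg[of y x] pairing_neg1)
    have e2: "pairing x (ad_circ brg \<phi>g z (\<phi>s b)) = pairing (brg (\<phi>g x) z) b" for x z b
      by (simp add: ad_char[OF bg] adj mg wg skg[of z "\<phi>g x"] pairing_neg1)
    have e3: "pairing (coad_circ brs \<phi>s (\<phi>s b) z) a = pairing z (brs a b)" for a b z
      by (simp add: coad_char[OF bs] ws sks[of b a] pairing_neg2)
    have e4: "pairing (coad_circ brs \<phi>s c (\<phi>g y)) a = pairing y (brs (\<phi>s a) c)" for a c y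
    proof -
      have "pairing (coad_circ brs \<phi>s c (\<phi>g y)) a = - pairing (\<phi>g y) (brs (\<phi>s c) a)"
        by (simp add: coad_char[OF bs])
      also have "\<dots> = - pairing y (\<phi>s (brs (\<phi>s c) a))" by (simp add: adj)
      also have "\<dots> = pairing y (brs (\<phi>s a) c)"
        by (simp add: ms ws sks[of c "\<phi>s a"] pairing_neg2)
      finally show ?thesis .
    qed
    have invp: "formB (M.bK (pack x a) (pack y b)) (pack z c) = formB (pack x a) (M.bK (M.pK (pack y b)) (pack z c))"
      for x a y b z c
    proof -
      have r: "formB (pack x a) (M.bK (M.pK (pack y b)) (pack z c)) =
         pairing x (brs (\<phi>s b) c) + pairing (brg x y) c - pairing (brg (\<phi>g x) z) b
         + pairing (brg (\<phi>g y) z) a + pairing z (brs a b) - pairing y (brs (\<phi>s a) c)"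
        by (simp add: formB_pack pairing_simps e1 e2 e3 e4)
      have l: "formB (M.bK (pack x a) (pack y b)) (pack z c) =
         pairing (brg x y) c - pairing y (brs (\<phi>s a) c) + pairing x (brs (\<phi>s b) c)
         + pairing z (brs a b) - pairing (brg (\<phi>g x) z) b + pairing (brg (\<phi>g y) z) a"
        by (simp add: formB_pack pairing_simps ad_char[OF bg] coad_char[OF bs])
      show ?thesis unfolding l r by (simp add: algebra_simps)
    qed
    have inv: "invariant_form formB M.bK M.pK"
      unfolding invariant_form_def
    proof (intro conjI allI)
      fix u v w
      show "formB (M.bK u v) w = formB u (M.bK (M.pK v) w)"
        using invp[of "p1 u" "p2 u" "p1 v" "p2 v" "p1 w" "p2 w"] by simp
    next
      fix u v
      show "formB (M.pK u) v = formB u (M.pK v)"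
        using pack_p[of u] pack_p[of v] M.pK_pack formB_pack adj
        by (metis add.commute)
    qed
    show "\<exists>(brK :: ('n + 'n \<Rightarrow> 'k) \<Rightarrow> ('n + 'n \<Rightarrow> 'k) \<Rightarrow> ('n + 'n \<Rightarrow> 'k)) \<phi>K.
            hom_lie brK \<phi>K
          \<and> (\<forall>x y. brK (incl1 x) (incl1 y) = incl1 (brg x y))
          \<and> (\<forall>x. \<phi>K (incl1 x) = incl1 (\<phi>g x))
          \<and> (\<forall>a b. brK (incl2 a) (incl2 b) = incl2 (brs a b))
          \<and> (\<forall>a. \<phi>K (incl2 a) = incl2 (\<phi>s a))
          \<and> invariant_form formB brK \<phi>K"
      using hK inv by (intro exI[of _ M.bK] exI[of _ M.pK]) (simp add: incl1_pack incl2_pack)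
  qed
qed

end
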